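(* Let $\mathscr{A}=\{A_1,\ldots,A_r\}$ be an irreducible set of real $d\times d$ matrices, $\|\cdot\|$ a norm on $\mathbb{R}^d$, $p\ge d-1$ and $n\ge1$ integers, and $\mu>1$. Suppose that for some $A_{i_1},\ldots,A_{i_n}\in\mathscr{A}$ and some nonzero $x_*\in\mathbb{R}^d$, \[ \|A_{i_n}\cdots A_{i_1}x_*\|\ge \mu\,\eta_p(\mathscr{A})\,\rho(\mathscr{A})^n\,\|x_*\|,\qquad \eta_p(\mathscr{A})=\frac{\max\{1,\rho(\mathscr{A})^p\}}{\chi_p(\mathscr{A})}. \] Then for every nonzero $x\in\mathbb{R}^d$ there is $F_x\in\mathscr{A}_\infty$ with $n\le \mathrm{len}(F_x)\le n+p$ and \[ \|F_x x\|\ge \big(\eta\,\rho(\mathscr{A})\big)^{\mathrm{len}(F_x)}\|x\|,\qquad\text{where }\eta=\mu^{1/(n+p)}>1. \]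
   Context: Irreducible: the matrices in $\mathscr{A}$ have no common invariant subspace other than $\{0\}$ and $\mathbb{R}^d$. $\mathscr{A}^k$ is the set of products of $k$ matrices from $\mathscr{A}$, $\mathscr{A}^0=\{I\}$; matrices carry the induced operator norm, $\|\mathscr{A}^n\|=\max_{A\in\mathscr{A}^n}\|A\|$, and $\rho(\mathscr{A})=\limsup_{n\to\infty}\|\mathscr{A}^n\|^{1/n}$ is the joint spectral radius. $\mathscr{A}_\infty=\bigcup_{k\ge1}\mathscr{A}^k$, elements regarded as products of factors from $\mathscr{A}$ whose number of factors is the length $\mathrm{len}$. $\mathscr{A}_p=\bigcup_{k=0}^p\mathscr{A}^k$, $\mathscr{A}_p(x)=\{Ax:A\in\mathscr{A}_p\}$, $\mathbf{S}(t)$ the closed $\|\cdot\|$-ball of radius $t$ about $0$, and $\chi_p(\mathscr{A})=\inf_{\|x\|=1}\sup\{t\ge0:\mathbf{S}(t)\subseteq\mathrm{conv}(\mathscr{A}_p(x)\cup\mathscr{A}_p(-x))\}$ is the $p$-measure of irreducibility. *)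

theory Defs
  imports "HOL-Analysis.Analysis"
begin

definition is_norm :: "(real^'n \<Rightarrow> real) \<Rightarrow> bool" where
  "is_norm N \<longleftrightarrow> (\<forall>x. N x = 0 \<longleftrightarrow> x = 0) \<and>
     (\<forall>c x. N (c *\<^sub>R x) = \<bar>c\<bar> * N x) \<and>
     (\<forall>x y. N (x + y) \<le> N x + N y)"

definition opnorm :: "(real^'n \<Rightarrow> real) \<Rightarrow> real^'n^'n \<Rightarrow> real" where
  "opnorm N A = (SUP x\<in>{x. N x = 1}. N (A *v x))"

definition irreducible_set :: "(real^'n^'n) set \<Rightarrow> bool" where
  "irreducible_set \<A> \<longleftrightarrow>
     (\<forall>V. subspace V \<and> (\<forall>A\<in>\<A>. (\<lambda>x. A *v x) ` V \<subseteq> V) \<longrightarrow> V = {0} \<or> V = UNIV)"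

text \<open>Product of a word of matrices: matprod [A_k, ..., A_1] = A_k ** ... ** A_1.
  The length of the list is the length of the product.\<close>
fun matprod :: "(real^'n^'n) list \<Rightarrow> real^'n^'n" where
  "matprod [] = mat 1"
| "matprod (A # ws) = A ** matprod ws"

definition prods :: "(real^'n^'n) set \<Rightarrow> nat \<Rightarrow> (real^'n^'n) set" where
  "prods \<A> k = {matprod ws | ws. set ws \<subseteq> \<A> \<and> length ws = k}"

definition setnorm :: "(real^'n \<Rightarrow> real) \<Rightarrow> (real^'n^'n) set \<Rightarrow> nat \<Rightarrow> real" where
  "setnorm N \<A> k = Max (opnorm N ` prods \<A> k)"

definition jsr :: "(real^'n \<Rightarrow> real) \<Rightarrow> (real^'n^'n) set \<Rightarrow> real" where
  "jsr N \<A> = real_of_ereal (limsup (\<lambda>n. ereal (root n (setnorm N \<A> n))))"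

definition orbit_p :: "(real^'n^'n) set \<Rightarrow> nat \<Rightarrow> real^'n \<Rightarrow> (real^'n) set" where
  "orbit_p \<A> p x = {A *v x | A. \<exists>k\<le>p. A \<in> prods \<A> k}"

definition chi :: "(real^'n \<Rightarrow> real) \<Rightarrow> (real^'n^'n) set \<Rightarrow> nat \<Rightarrow> real" where
  "chi N \<A> p = (INF x\<in>{x. N x = 1}.
      Sup {t. t \<ge> 0 \<and> {y. N y \<le> t} \<subseteq> convex hull (orbit_p \<A> p x \<union> orbit_p \<A> p (- x))})"

definition eta_p :: "(real^'n \<Rightarrow> real) \<Rightarrow> (real^'n^'n) set \<Rightarrow> nat \<Rightarrow> real" where
  "eta_p N \<A> p = max 1 (jsr N \<A> ^ p) / chi N \<A> p"

end

theory Submission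
  imports Defs "HOL-Real_Asymp.Real_Asymp"
begin

lemma norm_props:
  assumes "is_norm N"
  shows "N 0 = 0" "\<And>x. N x \<ge> 0" "\<And>x. N (- x) = N x" "\<And>c x. N (c *\<^sub>R x) = \<bar>c\<bar> * N x"
    "\<And>x y. N (x + y) \<le> N x + N y" "\<And>x. N x = 0 \<longleftrightarrow> x = 0"
proof -
  have h1: "\<And>x. N x = 0 \<longleftrightarrow> x = 0" and h2: "\<And>c x. N (c *\<^sub>R x) = \<bar>c\<bar> * N x"
    and h3: "\<And>x y. N (x + y) \<le> N x + N y" using assms unfolding is_norm_def by auto
  show "N 0 = 0" "\<And>c x. N (c *\<^sub>R x) = \<bar>c\<bar> * N x" "\<And>x y. N (x + y) \<le> N x + N y"
    "\<And>x. N x = 0 \<longleftrightarrow> x = 0" using h1 h2 h3 by auto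
  show neg: "\<And>x. N (- x) = N x" using h2[of "-1"] by simp
  fix x
  have "N 0 \<le> N x + N (-x)" using h3[of x "-x"] by simp
  then show "N x \<ge> 0" using h1[of 0] neg[of x] by simp
qed

lemma norm_convex:
  assumes "is_norm N"
  shows "convex_on UNIV N"
proof (rule convex_onI)
  fix t :: real and x y
  assume t: "0 < t" "t < 1"
  have "N ((1 - t) *\<^sub>R x + t *\<^sub>R y) \<le> N ((1 - t) *\<^sub>R x) + N (t *\<^sub>R y)"
    using norm_props(5)[OF assms] by blast
  also have "\<dots> = (1 - t) * N x + t * N y" using norm_props(4)[OF assms] t by simp
  finally show "N ((1 - t) *\<^sub>R x + t *\<^sub>R y) \<le> (1 - t) * N x + t * N y" .
qed auto

lemma norm_cont:
  assumes "is_norm N"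
  shows "continuous_on S N"
  using convex_on_continuous[OF open_UNIV norm_convex[OF assms]] continuous_on_subset by blast

lemma norm_lower:
  fixes N :: "real^'n \<Rightarrow> real"
  assumes "is_norm N"
  obtains m where "m > 0" "\<And>x. N x \<ge> m * norm x"
proof -
  obtain w :: "real^'n" where w: "norm w = 1" using vector_choose_size[of 1] by auto
  have "sphere (0::real^'n) 1 \<noteq> {}" using w by auto
  then obtain z where z: "z \<in> sphere 0 1" and zmin: "\<And>y. y \<in> sphere 0 1 \<Longrightarrow> N z \<le> N y"
    using continuous_attains_inf[OF compact_sphere _ norm_cont[OF assms]] by blast
  have "z \<noteq> 0" using z by auto
  then have mpos: "N z > 0" using norm_props[OF assms] by (metis less_eq_real_def)
  show thesis
  proof (rule that[OF mpos])
    fix x :: "real^'n"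
    show "N z * norm x \<le> N x"
    proof (cases "x = 0")
      case True then show ?thesis using norm_props[OF assms] by simp
    next
      case False
      have "N z \<le> N ((1 / norm x) *\<^sub>R x)" using zmin False by simp
      also have "\<dots> = N x / norm x" using norm_props(4)[OF assms] by simp
      finally show ?thesis using False by (simp add: field_simps)
    qed
  qed
qed

definition words where "words \<A> k = {ws. set ws \<subseteq> \<A> \<and> length ws \<le> k}"

lemma krylov:
  fixes \<A> :: "(real^'n^'n) set" and x :: "real^'n"
  assumes irr: "irreducible_set \<A>" and x: "x \<noteq> 0"
  shows "span ((\<lambda>ws. matprod ws *v x) ` words \<A> k) = UNIV \<or> dim ((\<lambda>ws. matprod ws *v x) ` words \<A> k) \<ge> k + 1"
proof (induction k)
  case 0
  have "words \<A> 0 = {[]}" unfolding words_def by auto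
  then show ?case using x by simp
next
  case (Suc k)
  define V where "V k = span ((\<lambda>ws. matprod ws *v x) ` words \<A> k)" for k
  have mono: "V k \<subseteq> V (Suc k)" unfolding V_def
    by (rule span_mono) (auto simp: words_def)
  have xin: "x \<in> V k" unfolding V_def
    by (rule span_base, rule image_eqI[of _ _ "[]"]) (auto simp: words_def)
  show ?case
  proof (cases "V (Suc k) = V k")
    case True
    have inv: "(\<lambda>y. A *v y) ` V k \<subseteq> V k" if A: "A \<in> \<A>" for A
    proof -
      have "(\<lambda>y. A *v y) ` V k = span ((\<lambda>y. A *v y) ` ((\<lambda>ws. matprod ws *v x) ` words \<A> k))"
        unfolding V_def by (rule linear_span_image[symmetric]) (simp add: matrix_vector_mul_linear)
      also have "\<dots> \<subseteq> V (Suc k)" unfolding V_def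
      proof (rule span_mono, clarsimp)
        fix ws assume "ws \<in> words \<A> k"
        then have "A # ws \<in> words \<A> (Suc k)" using A by (auto simp: words_def)
        then show "A *v (matprod ws *v x) \<in> (\<lambda>ws. matprod ws *v x) ` words \<A> (Suc k)"
          by (rule rev_image_eqI) (simp add: matrix_vector_mul_assoc)
      qed
      finally show ?thesis using True by simp
    qed
    have "V k = {0} \<or> V k = UNIV" using irr inv unfolding irreducible_set_def V_def
      by (simp add: subspace_span)
    then have "V k = UNIV" using xin x by auto
    then show ?thesis using True unfolding V_def by simp
  next
    case False
    show ?thesis
    proof (cases "V k = UNIV")
      case True then show ?thesis using mono unfolding V_def by auto
    next
      case F2: False
      then have "dim ((\<lambda>ws. matprod ws *v x) ` words \<A> k) \<ge> k + 1" using Suc.IH unfolding V_def by auto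
      moreover have "dim ((\<lambda>ws. matprod ws *v x) ` words \<A> k) < dim ((\<lambda>ws. matprod ws *v x) ` words \<A> (Suc k))"
        using dim_psubset mono False unfolding V_def by blast
      ultimately show ?thesis by simp
    qed
  qed
qed

lemma krylov_full:
  fixes \<A> :: "(real^'n^'n) set" and x :: "real^'n"
  assumes irr: "irreducible_set \<A>" and x: "x \<noteq> 0" and hp: "p \<ge> CARD('n) - 1"
  shows "span ((\<lambda>ws. matprod ws *v x) ` words \<A> p) = UNIV"
proof -
  have "dim ((\<lambda>ws. matprod ws *v x) ` words \<A> p) \<le> CARD('n)"
    using dim_subset_UNIV[where ?'a="real^'n"] by simp
  moreover have "CARD('n) \<ge> 1" by (simp add: Suc_leI)
  ultimately have "span ((\<lambda>ws. matprod ws *v x) ` words \<A> p) = UNIV \<or>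
     dim ((\<lambda>ws. matprod ws *v x) ` words \<A> p) = DIM(real^'n)"
    using krylov[OF irr x, of p] hp by auto
  then show ?thesis using dim_eq_full by blast
qed

lemma orbit_eq: "orbit_p \<A> p x = (\<lambda>ws. matprod ws *v x) ` words \<A> p"
  unfolding orbit_p_def prods_def words_def by auto

lemma mvneg: "(A::real^'n^'m) *v (- x) = - (A *v x)"
  using matrix_vector_mult_scaleR[of A "-1" x] by simp

lemma finite_words: "finite \<A> \<Longrightarrow> finite (words \<A> p)"
  unfolding words_def by (rule finite_lists_length_le)

lemma uniform_ball:
  fixes \<A> :: "(real^'n^'n) set" and N :: "real^'n \<Rightarrow> real"
  assumes fin: "finite \<A>" and irr: "irreducible_set \<A>" and nrm: "is_norm N"
    and hp: "p \<ge> CARD('n) - 1"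
  obtains \<delta> where "\<delta> > 0" "\<And>x y. N x = 1 \<Longrightarrow> N y \<le> \<delta> \<Longrightarrow>
      y \<in> convex hull (orbit_p \<A> p x \<union> orbit_p \<A> p (- x))"
proof -
  obtain m where m: "m > 0" "\<And>x. N x \<ge> m * norm x" using norm_lower[OF nrm] by blast
  define W where "W = words \<A> p"
  have finW: "finite W" unfolding W_def using finite_words[OF fin] .
  have nilW: "[] \<in> W" unfolding W_def words_def by auto
  define Q where "Q z = (\<Sum>ws\<in>W. \<bar>(matprod ws *v fst z) \<bullet> snd z\<bar>)" for z :: "(real^'n) \<times> (real^'n)"
  define T where "T = {x. N x = 1} \<times> sphere (0::real^'n) 1"
  have cl: "closed {x::real^'n. N x = 1}"
    using continuous_closed_preimage_constant[OF norm_cont[OF nrm] closed_UNIV, of 1] by simp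
  have bd: "bounded {x::real^'n. N x = 1}"
  proof -
    have "{x::real^'n. N x = 1} \<subseteq> cball 0 (1/m)"
      using m by (auto simp: field_simps) (metis mult.commute)
    then show ?thesis using bounded_cball bounded_subset by blast
  qed
  have cT: "compact T" unfolding T_def
    by (rule compact_Times) (use cl bd compact_eq_bounded_closed in auto)
  obtain w :: "real^'n" where w: "norm w = 1" using vector_choose_size[of 1] by auto
  have "w \<noteq> 0" using w by auto
  then have Nw: "N w > 0" using norm_props(2)[OF nrm, of w] norm_props(6)[OF nrm, of w] by linarith
  have "((1 / N w) *\<^sub>R w, w) \<in> T" unfolding T_def using w Nw norm_props(4)[OF nrm] by auto
  then have Tne: "T \<noteq> {}" by blast
  have contQ: "continuous_on T Q" unfolding Q_def
    by (intro continuous_intros bounded_linear.continuous_on[OF matrix_vector_mul_bounded_linear])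
  obtain z0 where z0: "z0 \<in> T" and z0min: "\<And>z. z \<in> T \<Longrightarrow> Q z0 \<le> Q z"
    using continuous_attains_inf[OF cT Tne contQ] by blast
  have Qpos: "Q z > 0" if zT: "z \<in> T" for z
  proof (rule ccontr)
    assume "\<not> Q z > 0"
    moreover have "Q z \<ge> 0" unfolding Q_def by (simp add: sum_nonneg)
    ultimately have "Q z = 0" by simp
    then have "\<forall>ws\<in>W. \<bar>(matprod ws *v fst z) \<bullet> snd z\<bar> = 0"
      unfolding Q_def using sum_nonneg_eq_0_iff[OF finW, of "\<lambda>ws. \<bar>(matprod ws *v fst z) \<bullet> snd z\<bar>"]
      by simp
    then have zero: "\<And>ws. ws \<in> W \<Longrightarrow> (matprod ws *v fst z) \<bullet> snd z = 0" by simp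
    have "N (fst z) = 1" using zT unfolding T_def by auto
    then have "fst z \<noteq> 0" using norm_props(1)[OF nrm] by auto
    then have sp: "span ((\<lambda>ws. matprod ws *v fst z) ` W) = UNIV"
      using krylov_full[OF irr _ hp] unfolding W_def by blast
    have "span ((\<lambda>ws. matprod ws *v fst z) ` W) \<subseteq> {y. y \<bullet> snd z = 0}"
      by (rule span_minimal[OF _ subspace_hyperplane2]) (use zero in blast)
    then have "snd z \<bullet> snd z = 0" using sp by blast
    moreover have "norm (snd z) = 1" using zT unfolding T_def by auto
    ultimately show False by simp
  qed
  define q where "q = Q z0"
  have qpos: "q > 0" unfolding q_def using Qpos[OF z0] .
  define M where "M = real (card W)"
  have Mpos: "M > 0" unfolding M_def using finW nilW card_gt_0_iff by fastforce
  have key: "norm y \<le> q / M \<Longrightarrow> y \<in> convex hull (orbit_p \<A> p x \<union> orbit_p \<A> p (- x))"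
    if x: "N x = 1" for x y
  proof (rule ccontr)
    assume ny: "norm y \<le> q / M" and yn: "y \<notin> convex hull (orbit_p \<A> p x \<union> orbit_p \<A> p (- x))"
    define C where "C = convex hull (orbit_p \<A> p x \<union> orbit_p \<A> p (- x))"
    have finK: "finite (orbit_p \<A> p x \<union> orbit_p \<A> p (- x))"
      unfolding orbit_eq using finite_words[OF fin] by auto
    have "closed C" unfolding C_def using finite_imp_compact_convex_hull[OF finK] compact_imp_closed by blast
    then obtain a b where ab: "a \<bullet> y < b" "\<And>z. z \<in> C \<Longrightarrow> a \<bullet> z > b"
      using separating_hyperplane_closed_point[of C y] yn unfolding C_def by auto
    have inC: "matprod ws *v x \<in> C" "- (matprod ws *v x) \<in> C" if "ws \<in> W" for ws
      unfolding C_def orbit_eq using that W_def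
      by (auto intro!: hull_inc simp: mvneg[symmetric])
    have xK: "x \<in> C" "- x \<in> C" using inC(1,2)[OF nilW] by simp_all
    have cC: "convex C" unfolding C_def by simp
    have "(1/2) *\<^sub>R x + (1/2) *\<^sub>R (- x) \<in> C" by (rule convexD[OF cC xK]) auto
    then have "0 \<in> C" by simp
    then have bneg: "b < 0" using ab(2) by force
    have trm: "\<bar>(matprod ws *v x) \<bullet> a\<bar> < - b" if "ws \<in> W" for ws
      using ab(2)[OF inC(1)[OF that]] ab(2)[OF inC(2)[OF that]] by (auto simp: inner_commute)
    have "a \<noteq> 0" using ab(1) bneg by auto
    define u where "u = (1 / norm a) *\<^sub>R a"
    have uT: "(x, u) \<in> T" unfolding T_def u_def using x \<open>a \<noteq> 0\<close> by simp
    have "q \<le> Q (x, u)" unfolding q_def using z0min[OF uT] .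
    also have "Q (x, u) = (\<Sum>ws\<in>W. \<bar>(matprod ws *v x) \<bullet> a\<bar>) / norm a"
      unfolding Q_def u_def by (simp add: sum_divide_distrib abs_mult)
    finally have q1: "q \<le> (\<Sum>ws\<in>W. \<bar>(matprod ws *v x) \<bullet> a\<bar>) / norm a" .
    have "(\<Sum>ws\<in>W. \<bar>(matprod ws *v x) \<bullet> a\<bar>) < (\<Sum>ws\<in>W. - b)"
      by (rule sum_strict_mono[OF finW]) (use nilW trm in auto)
    also have "(\<Sum>ws\<in>W. - b) = M * (- b)" unfolding M_def by simp
    also have "M * (- b) \<le> M * (norm a * norm y)"
    proof -
      have "- b < - (a \<bullet> y)" using ab(1) by simp
      also have "- (a \<bullet> y) \<le> norm a * norm y"
        using Cauchy_Schwarz_ineq2[of a y] by (simp add: abs_le_iff)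
      finally have "- b \<le> norm a * norm y" by simp
      then show ?thesis using Mpos by (metis mult_left_mono less_eq_real_def)
    qed
    finally have "(\<Sum>ws\<in>W. \<bar>(matprod ws *v x) \<bullet> a\<bar>) / norm a < M * norm y"
      using \<open>a \<noteq> 0\<close> by (simp add: field_simps)
    then have "q < M * norm y" using q1 by linarith
    then show False using ny Mpos by (simp add: field_simps)
  qed
  show thesis
  proof (rule that[of "m * q / M"])
    show "m * q / M > 0" using m qpos Mpos by simp
    fix x y assume "N x = 1" "N y \<le> m * q / M"
    moreover have "norm y \<le> q / M"
    proof -
      have "m * norm y \<le> m * (q / M)" using m(2)[of y] \<open>N y \<le> m * q / M\<close> by simp
      then show ?thesis using mult_le_cancel_left_pos[OF m(1)] by blast
    qed
    ultimately show "y \<in> convex hull (orbit_p \<A> p x \<union> orbit_p \<A> p (- x))" using key by blast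
  qed
qed

lemma arith_bound:
  fixes \<mu> \<rho> :: real
  assumes "\<mu> > 1" "\<rho> \<ge> 0" "j \<le> p" "n \<ge> 1"
  shows "(\<mu> powr (1 / real (n + p)) * \<rho>) ^ (n + j) \<le> \<mu> * max 1 (\<rho> ^ p) * \<rho> ^ n"
proof -
  have "(\<mu> powr (1 / real (n + p))) ^ (n + j) = \<mu> powr (real (n + j) * (1 / real (n + p)))"
    using assms by (intro powr_power) auto
  then have "(\<mu> powr (1 / real (n + p)) * \<rho>) ^ (n + j) = \<mu> powr (real (n + j) / real (n + p)) * (\<rho> ^ j * \<rho> ^ n)"
    by (simp add: power_mult_distrib power_add mult.commute)
  also have "\<dots> \<le> \<mu> * (max 1 (\<rho> ^ p) * \<rho> ^ n)"
  proof (rule mult_mono)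
    have "real (n + j) / real (n + p) \<le> 1" using assms by simp
    then have "\<mu> powr (real (n + j) / real (n + p)) \<le> \<mu> powr 1"
      using assms by (intro powr_mono) auto
    then show "\<mu> powr (real (n + j) / real (n + p)) \<le> \<mu>" using assms by simp
    have "\<rho> ^ j \<le> max 1 (\<rho> ^ p)"
    proof (cases "\<rho> \<le> 1")
      case True then have "\<rho> ^ j \<le> 1" using assms power_le_one by blast
      then show ?thesis by (simp add: le_max_iff_disj)
    next
      case False then show ?thesis using assms power_increasing[of j p \<rho>] by (simp add: le_max_iff_disj)
    qed
    then show "\<rho> ^ j * \<rho> ^ n \<le> max 1 (\<rho> ^ p) * \<rho> ^ n" using assms by (simp add: mult_right_mono)
  qed (use assms in auto)
  finally show ?thesis by (simp add: mult.assoc)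
qed

lemma matprod_append: "matprod (ws @ gs) = matprod ws ** matprod gs"
  by (induction ws) (simp_all add: matrix_mul_assoc matrix_mul_lid)

lemma norm_bdd_compact:
  assumes "is_norm N" "compact K"
  shows "bdd_above (N ` K)"
  using compact_continuous_image[OF norm_cont[OF assms(1)] assms(2)]
  by (simp add: bounded_imp_bdd_above compact_imp_bounded)

lemma opnorm_nonneg:
  fixes N :: "real^'n \<Rightarrow> real"
  assumes nrm: "is_norm N"
  shows "opnorm N A \<ge> 0"
proof -
  obtain m where m: "m > 0" "\<And>x. N x \<ge> m * norm x" using norm_lower[OF nrm] by blast
  have cl: "closed {x::real^'n. N x = 1}"
    using continuous_closed_preimage_constant[OF norm_cont[OF nrm] closed_UNIV, of 1] by simp
  have "{x::real^'n. N x = 1} \<subseteq> cball 0 (1/m)"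
  proof
    fix x :: "real^'n" assume "x \<in> {x. N x = 1}"
    then have "m * norm x \<le> 1" using m(2)[of x] by simp
    then show "x \<in> cball 0 (1/m)" using m(1) by (simp add: field_simps mult.commute)
  qed
  then have "bounded {x::real^'n. N x = 1}" using bounded_cball bounded_subset by blast
  then have cp: "compact {x::real^'n. N x = 1}" using cl compact_eq_bounded_closed by blast
  have "compact ((\<lambda>x. A *v x) ` {x::real^'n. N x = 1})"
    by (rule compact_continuous_image[OF _ cp]) (intro continuous_intros)
  then have bd: "bdd_above (N ` (\<lambda>x. A *v x) ` {x::real^'n. N x = 1})" by (rule norm_bdd_compact[OF nrm])
  obtain w :: "real^'n" where w: "norm w = 1" using vector_choose_size[of 1] by auto
  have "w \<noteq> 0" using w by auto
  then have Nw: "N w > 0" using norm_props(2)[OF nrm, of w] norm_props(6)[OF nrm, of w] by linarith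
  define w1 where "w1 = (1 / N w) *\<^sub>R w"
  have w1: "N w1 = 1" unfolding w1_def using Nw norm_props(4)[OF nrm] by simp
  have "0 \<le> N (A *v w1)" using norm_props(2)[OF nrm] by simp
  also have "\<dots> \<le> opnorm N A" unfolding opnorm_def
    by (rule cSUP_upper) (use w1 bd in \<open>auto simp: image_image\<close>)
  finally show ?thesis .
qed

lemma jsr_nonneg:
  fixes N :: "real^'n \<Rightarrow> real"
  assumes nrm: "is_norm N" and fin: "finite \<A>" and ne: "\<A> \<noteq> {}"
  shows "jsr N \<A> \<ge> 0"
proof -
  have sn: "setnorm N \<A> k \<ge> 0" for k
  proof -
    obtain A where A: "A \<in> \<A>" using ne by blast
    have "matprod (replicate k A) \<in> prods \<A> k" unfolding prods_def using A by force
    moreover have "finite (prods \<A> k)"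
    proof -
      have "prods \<A> k \<subseteq> matprod ` {xs. set xs \<subseteq> \<A> \<and> length xs \<le> k}" unfolding prods_def by auto
      then show ?thesis using finite_lists_length_le[OF fin] finite_subset by blast
    qed
    ultimately show ?thesis unfolding setnorm_def
      using opnorm_nonneg[OF nrm] by (meson Max_ge dual_order.trans finite_imageI imageI)
  qed
  have "ereal 0 \<le> limsup (\<lambda>n. ereal (root n (setnorm N \<A> n)))"
    by (rule le_Limsup) (use sn in \<open>auto simp: real_root_ge_zero\<close>)
  then show ?thesis unfolding jsr_def using real_of_ereal_pos zero_ereal_def by metis
qed

theorem lemma3:
  fixes \<A> :: "(real^'n^'n) set" and N :: "real^'n \<Rightarrow> real"
    and p n :: nat and \<mu> :: real
  assumes fin: "finite \<A>" and ne: "\<A> \<noteq> {}"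
    and irr: "irreducible_set \<A>"
    and nrm: "is_norm N"
    and hp: "p \<ge> CARD('n) - 1" and hn: "n \<ge> 1" and hmu: "\<mu> > 1"
    and hyp: "\<exists>ws xs. set ws \<subseteq> \<A> \<and> length ws = n \<and> xs \<noteq> 0 \<and>
               N (matprod ws *v xs) \<ge> \<mu> * eta_p N \<A> p * jsr N \<A> ^ n * N xs"
  shows "\<forall>x. x \<noteq> 0 \<longrightarrow> (\<exists>F. set F \<subseteq> \<A> \<and> n \<le> length F \<and> length F \<le> n + p \<and>
            N (matprod F *v x) \<ge> (\<mu> powr (1 / real (n + p)) * jsr N \<A>) ^ length F * N x)"
proof (intro allI impI)
  fix x :: "real^'n" assume x: "x \<noteq> 0"
  obtain \<delta> where \<delta>: "\<delta> > 0" and ball: "\<And>x y. N x = 1 \<Longrightarrow> N y \<le> \<delta> \<Longrightarrow>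
      y \<in> convex hull (orbit_p \<A> p x \<union> orbit_p \<A> p (- x))"
    using uniform_ball[OF fin irr nrm hp] by blast
  obtain ws xs where ws: "set ws \<subseteq> \<A>" "length ws = n" and xs: "xs \<noteq> 0"
    and hx: "N (matprod ws *v xs) \<ge> \<mu> * eta_p N \<A> p * jsr N \<A> ^ n * N xs" using hyp by blast
  define \<rho> where "\<rho> = jsr N \<A>"
  have \<rho>0: "\<rho> \<ge> 0" unfolding \<rho>_def using jsr_nonneg[OF nrm fin ne] .
  define H where "H x = convex hull (orbit_p \<A> p x \<union> orbit_p \<A> p (- x))" for x
  define S where "S x = {t. t \<ge> 0 \<and> {y. N y \<le> t} \<subseteq> H x}" for x
  have chi_eq: "chi N \<A> p = (INF x\<in>{x. N x = 1}. Sup (S x))"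
    unfolding chi_def S_def H_def by simp
  have finK: "finite (orbit_p \<A> p x \<union> orbit_p \<A> p (- x))" for x
    unfolding orbit_eq using finite_words[OF fin] by auto
  have cH: "compact (H x)" for x unfolding H_def using finite_imp_compact_convex_hull[OF finK] .
  have bddS: "bdd_above (S x)" if "N x = 1" for x
  proof -
    obtain R where R: "\<And>z. z \<in> H x \<Longrightarrow> N z \<le> R"
      using norm_bdd_compact[OF nrm cH[of x]] by (auto simp: bdd_above_def)
    show ?thesis
    proof (rule bdd_aboveI)
      fix t assume "t \<in> S x"
      then have t: "t \<ge> 0" "{y. N y \<le> t} \<subseteq> H x" unfolding S_def by auto
      have "N (t *\<^sub>R x) = t" using norm_props(4)[OF nrm] that t by simp
      then have "t *\<^sub>R x \<in> H x" using t by auto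
      then show "t \<le> R" using R \<open>N (t *\<^sub>R x) = t\<close> by fastforce
    qed
  qed
  have dS: "\<delta> \<in> S x" if "N x = 1" for x
    unfolding S_def H_def using ball[OF that] \<delta> by auto
  have supge: "\<delta> \<le> Sup (S x)" if "N x = 1" for x
    using cSup_upper[OF dS[OF that] bddS[OF that]] .
  obtain w :: "real^'n" where w: "norm w = 1" using vector_choose_size[of 1] by auto
  have "w \<noteq> 0" using w by auto
  then have Nw: "N w > 0" using norm_props(2)[OF nrm, of w] norm_props(6)[OF nrm, of w] by linarith
  have "N ((1 / N w) *\<^sub>R w) = 1" using Nw norm_props(4)[OF nrm] by simp
  then have dom_ne: "{x. N x = 1} \<noteq> {}" by blast
  define c where "c = chi N \<A> p"
  have cpos: "c \<ge> \<delta>" unfolding c_def chi_eq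
    by (rule cINF_greatest[OF dom_ne]) (use supge in auto)
  have Nx: "N x > 0" using norm_props(2)[OF nrm, of x] norm_props(6)[OF nrm, of x] x by linarith
  define x1 where "x1 = (1 / N x) *\<^sub>R x"
  have x1: "N x1 = 1" unfolding x1_def using Nx norm_props(4)[OF nrm] by simp
  have cle: "c \<le> Sup (S x1)" unfolding c_def chi_eq
    by (rule cINF_lower) (use x1 supge in \<open>auto intro!: bdd_belowI2\<close>)
  have Sne: "S x1 \<noteq> {}" using dS[OF x1] by blast
  have inH: "y \<in> H x1" if y: "N y \<le> c" for y
  proof -
    define f where "f k = (1 - 1 / (real k + 2)) *\<^sub>R y" for k :: nat
    have fin: "f k \<in> H x1" for k
    proof -
      have s: "0 < 1 - 1 / (real k + 2)" "1 - 1 / (real k + 2) < 1" by (auto simp: field_simps)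
      have Nf: "N (f k) = (1 - 1 / (real k + 2)) * N y"
        unfolding f_def using norm_props(4)[OF nrm] s by simp
      have "N (f k) < Sup (S x1)"
      proof (cases "N y = 0")
        case True then show ?thesis using Nf supge[OF x1] \<delta> by simp
      next
        case False
        then have "N y > 0" using norm_props(2)[OF nrm, of y] by linarith
        then have "N (f k) < N y" using Nf s by simp
        then show ?thesis using y cle by linarith
      qed
      then obtain t where t: "t \<in> S x1" "N (f k) < t"
        using less_cSup_iff[OF Sne bddS[OF x1]] by blast
      then show ?thesis unfolding S_def by auto
    qed
    have "(\<lambda>k. 1 - 1 / (real k + 2)) \<longlonglongrightarrow> 1" by real_asymp
    then have "f \<longlonglongrightarrow> 1 *\<^sub>R y" unfolding f_def by (intro tendsto_scaleR tendsto_const)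
    then show ?thesis using closed_sequentially[OF compact_imp_closed[OF cH] fin] by simp
  qed
  have Nxs: "N xs > 0" using norm_props(2)[OF nrm, of xs] norm_props(6)[OF nrm, of xs] xs by linarith
  define v where "v = (c / N xs) *\<^sub>R xs"
  have "c > 0" using cpos \<delta> by linarith
  have Nv: "N v = c" unfolding v_def using norm_props(4)[OF nrm] Nxs \<open>c > 0\<close> by simp
  have vH: "v \<in> H x1" using inH Nv by simp
  define P where "P = matprod ws"
  define K where "K = orbit_p \<A> p x1 \<union> orbit_p \<A> p (- x1)"
  have "\<exists>k\<in>K. N (P *v k) \<ge> N (P *v v)"
  proof (rule ccontr)
    assume "\<not> ?thesis"
    then have lt: "\<And>k. k \<in> K \<Longrightarrow> N (P *v k) < N (P *v v)" by force
    have x1K: "x1 \<in> K" unfolding K_def orbit_eq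
      by (rule UnI1, rule image_eqI[of _ _ "[]"]) (auto simp: words_def)
    define M where "M = Max ((\<lambda>k. N (P *v k)) ` K)"
    have KM: "K \<subseteq> {z. N (P *v z) \<le> M}" unfolding M_def using finK[of x1] K_def by auto
    have cv: "convex {z. N (P *v z) \<le> M}"
    proof (rule convexI)
      fix a b :: "real^'n" and u w :: real
      assume a: "a \<in> {z. N (P *v z) \<le> M}" and b: "b \<in> {z. N (P *v z) \<le> M}"
        and u: "0 \<le> u" "0 \<le> w" "u + w = 1"
      have "N (P *v (u *\<^sub>R a + w *\<^sub>R b)) = N (u *\<^sub>R (P *v a) + w *\<^sub>R (P *v b))"
        by (simp add: matrix_vector_right_distrib matrix_vector_mult_scaleR)
      also have "\<dots> \<le> N (u *\<^sub>R (P *v a)) + N (w *\<^sub>R (P *v b))" using norm_props(5)[OF nrm] .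
      also have "\<dots> = u * N (P *v a) + w * N (P *v b)" using norm_props(4)[OF nrm] u by simp
      also have "\<dots> \<le> u * M + w * M" using a b u by (intro add_mono mult_left_mono) auto
      also have "\<dots> = M" by (simp only: distrib_right[symmetric] u(3) mult_1)
      finally show "u *\<^sub>R a + w *\<^sub>R b \<in> {z. N (P *v z) \<le> M}" by simp
    qed
    have "H x1 \<subseteq> {z. N (P *v z) \<le> M}" unfolding H_def by (rule hull_minimal[where S=convex, OF KM[unfolded K_def] cv])
    then have "N (P *v v) \<le> M" using vH by auto
    moreover have "M \<in> (\<lambda>k. N (P *v k)) ` K" unfolding M_def using finK[of x1] x1K K_def
      by (intro Max_in) auto
    ultimately show False using lt by force
  qed
  then obtain gs where gs: "gs \<in> words \<A> p" and kge: "N (P *v (matprod gs *v x1)) \<ge> N (P *v v)"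
    unfolding K_def orbit_eq using norm_props(3)[OF nrm] by (auto simp: mvneg)
  have "eta_p N \<A> p = max 1 (\<rho> ^ p) / c" unfolding eta_p_def \<rho>_def c_def by simp
  then have hx': "N (P *v xs) \<ge> \<mu> * (max 1 (\<rho> ^ p) / c) * \<rho> ^ n * N xs"
    using hx unfolding P_def \<rho>_def by simp
  have "N (P *v v) = c / N xs * N (P *v xs)"
    unfolding v_def using norm_props(4)[OF nrm] Nxs \<open>c > 0\<close> by (simp add: matrix_vector_mult_scaleR)
  also have "\<dots> \<ge> c / N xs * (\<mu> * (max 1 (\<rho> ^ p) / c) * \<rho> ^ n * N xs)"
    using hx' Nxs \<open>c > 0\<close> by (intro mult_left_mono) auto
  finally have "N (P *v v) \<ge> \<mu> * max 1 (\<rho> ^ p) * \<rho> ^ n"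
    using Nxs \<open>c > 0\<close> by (simp add: field_simps)
  with kge have k1: "N (P *v (matprod gs *v x1)) \<ge> \<mu> * max 1 (\<rho> ^ p) * \<rho> ^ n" by linarith
  define F where "F = ws @ gs"
  have "matprod F *v x = N x *\<^sub>R (P *v (matprod gs *v x1))"
    unfolding F_def P_def x1_def using Nx
    by (simp add: matprod_append matrix_vector_mul_assoc matrix_vector_mult_scaleR)
  then have NF: "N (matprod F *v x) = N x * N (P *v (matprod gs *v x1))"
    using norm_props(4)[OF nrm] Nx by simp
  have lg: "length gs \<le> p" "set gs \<subseteq> \<A>" using gs unfolding words_def by auto
  show "\<exists>F. set F \<subseteq> \<A> \<and> n \<le> length F \<and> length F \<le> n + p \<and>
            N (matprod F *v x) \<ge> (\<mu> powr (1 / real (n + p)) * jsr N \<A>) ^ length F * N x"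
  proof (intro exI conjI)
    show "set F \<subseteq> \<A>" "n \<le> length F" "length F \<le> n + p" unfolding F_def using ws lg by auto
    have "(\<mu> powr (1 / real (n + p)) * jsr N \<A>) ^ length F * N x
        \<le> (\<mu> * max 1 (\<rho> ^ p) * \<rho> ^ n) * N x"
      unfolding F_def \<rho>_def using arith_bound[OF hmu jsr_nonneg[OF nrm fin ne] lg(1) hn] ws Nx
      by (intro mult_right_mono) (auto simp: \<rho>_def)
    also have "\<dots> \<le> N x * N (P *v (matprod gs *v x1))" using k1 Nx by (simp add: mult.commute)
    finally show "N (matprod F *v x) \<ge> (\<mu> powr (1 / real (n + p)) * jsr N \<A>) ^ length F * N x"
      using NF by simp
  qed
qed

end
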